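(* Let $\mathcal{A}=(\Sigma,Q,I,F,\delta)$ be an NFA, for each $w\in\Sigma$ let $T^{(w)}$ be its $|Q|\times|Q|$ Boolean transition matrix, and let $\mathcal{A}_{\mathrm{SS}}$ be the subset automaton of $\mathcal{A}$. Then $$|\mathcal{A}_{\mathrm{SS}}|\le 1+\sum_{w\in\Sigma}\left|\mathcal{R}(T^{(w)})\right|,$$ where $\mathcal{R}(T)$ denotes the range of the matrix $T$ over the Boolean semifield.
   Context: An NFA is $\mathcal{A}=(\Sigma,Q,I,F,\delta)$ with finite alphabet $\Sigma$, finite state set $Q=\{q_1,\dots,q_n\}$, initial states $I$, accepting states $F$, transitions $\delta\subseteq Q\times\Sigma\times Q$ ($\varepsilon$-free). The Boolean semifield is $\mathbb{B}=(\{0,1\},\vee,\wedge,0,1)$. The transition matrix $T^{(w)}\in\mathbb{B}^{n\times n}$ has $T^{(w)}_{i,j}=1$ iff $(q_i,w,q_j)\in\delta$. The range $\mathcal{R}(T)$ of a Boolean matrix $T$ is the set $\{Tv: v\in\mathbb{B}^n\}$ with Boolean matrix–vector multiplication. The subset automaton $\mathcal{A}_{\mathrm{SS}}$ is the DFA whose states are exactly the subsets $\mathcal{Q}\subseteq Q$ reachable from $\mathcal{Q}_I=I$ by repeatedly applying, for $w\in\Sigma$, the map $\mathcal{Q}\mapsto\{q':(q,w,q')\in\delta,\ q\in\mathcal{Q}\}$ (including the empty set if reachable); $|\mathcal{A}_{\mathrm{SS}}|$ is its number of states. *)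

theory Defs
  imports Main
begin

text \<open>States are the elements of a finite type 'q (Q = UNIV), letters have type 'a,
  the alphabet is a finite set Sigma.\<close>

definition trans_mat :: "('q \<times> 'a \<times> 'q) set \<Rightarrow> 'a \<Rightarrow> 'q \<Rightarrow> 'q \<Rightarrow> bool" where
  "trans_mat \<delta> w i j \<longleftrightarrow> (i, w, j) \<in> \<delta>"

definition bmat_vec :: "('q \<Rightarrow> 'q \<Rightarrow> bool) \<Rightarrow> ('q \<Rightarrow> bool) \<Rightarrow> ('q \<Rightarrow> bool)" where
  "bmat_vec T v = (\<lambda>i. \<exists>j. T i j \<and> v j)"

definition bmat_range :: "('q \<Rightarrow> 'q \<Rightarrow> bool) \<Rightarrow> ('q \<Rightarrow> bool) set" where
  "bmat_range T = {bmat_vec T v | v. True}"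

definition subset_step :: "('q \<times> 'a \<times> 'q) set \<Rightarrow> 'a \<Rightarrow> 'q set \<Rightarrow> 'q set" where
  "subset_step \<delta> w S = {q'. \<exists>q\<in>S. (q, w, q') \<in> \<delta>}"

inductive_set ss_states :: "'a set \<Rightarrow> ('q \<times> 'a \<times> 'q) set \<Rightarrow> 'q set \<Rightarrow> 'q set set"
  for \<Sigma> \<delta> I where
  init: "I \<in> ss_states \<Sigma> \<delta> I"
| step: "S \<in> ss_states \<Sigma> \<delta> I \<Longrightarrow> w \<in> \<Sigma> \<Longrightarrow> subset_step \<delta> w S \<in> ss_states \<Sigma> \<delta> I"

end

theory Submission
  imports Defs
begin

lemma ss_sub:
  "ss_states \<Sigma> \<delta> I \<subseteq> insert I (\<Union>w\<in>\<Sigma>. range (subset_step \<delta> w))"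
proof
  fix S assume "S \<in> ss_states \<Sigma> \<delta> I"
  then show "S \<in> insert I (\<Union>w\<in>\<Sigma>. range (subset_step \<delta> w))"
    by (induction rule: ss_states.induct) auto
qed

lemma range_le:
  fixes \<delta> :: "('q::finite \<times> 'a \<times> 'q) set"
  shows "card (range (subset_step \<delta> w)) \<le> card (bmat_range (trans_mat \<delta> w))"
proof -
  define f where "f = (\<lambda>S::'q set. \<lambda>i. \<exists>j. (i,w,j)\<in>\<delta> \<and> j \<notin> S)"
  have inv: "subset_step \<delta> w {i. \<not> f S i} = S" if hS: "S \<in> range (subset_step \<delta> w)" for S
  proof -
    obtain U where U: "S = subset_step \<delta> w U" using hS by blast
    show ?thesis unfolding U f_def subset_step_def by auto
  qed
  have "inj_on f (range (subset_step \<delta> w))"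
    by (rule inj_on_inverseI[where g="\<lambda>v. subset_step \<delta> w {i. \<not> v i}"]) (rule inv)
  moreover have "f ` range (subset_step \<delta> w) \<subseteq> bmat_range (trans_mat \<delta> w)"
    unfolding f_def bmat_range_def bmat_vec_def trans_mat_def
    by (auto intro!: exI[where x="\<lambda>j. j \<notin> _"])
  ultimately show ?thesis
    by (intro card_inj_on_le) auto
qed

theorem lemma2:
  fixes \<Sigma> :: "'a set" and I F :: "'q::finite set" and \<delta> :: "('q \<times> 'a \<times> 'q) set"
  assumes "finite \<Sigma>"
    and "\<delta> \<subseteq> UNIV \<times> \<Sigma> \<times> UNIV"
  shows "card (ss_states \<Sigma> \<delta> I) \<le> 1 + (\<Sum>w\<in>\<Sigma>. card (bmat_range (trans_mat \<delta> w)))"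
proof -
  have "card (ss_states \<Sigma> \<delta> I) \<le> card (insert I (\<Union>w\<in>\<Sigma>. range (subset_step \<delta> w)))"
    by (intro card_mono ss_sub) auto
  also have "\<dots> \<le> 1 + card (\<Union>w\<in>\<Sigma>. range (subset_step \<delta> w))"
    by (simp add: card_insert_le_m1 card_insert_if)
  also have "card (\<Union>w\<in>\<Sigma>. range (subset_step \<delta> w)) \<le> (\<Sum>w\<in>\<Sigma>. card (range (subset_step \<delta> w)))"
    by (rule card_UN_le) (rule assms(1))
  also have "\<dots> \<le> (\<Sum>w\<in>\<Sigma>. card (bmat_range (trans_mat \<delta> w)))"
    by (intro sum_mono range_le)
  finally show ?thesis by simp
qed

end
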